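(* Under Assumption (A), there exists an integer $N$ such that for all $n\ge N$, $\mathbb E_\pi[1/A]\le 2/\delta$, where the expectation is over $x=(A,\mu,\theta_1,\dots,\theta_n)\sim\pi$.
   Context: Fix $V>0$, $a>0$, $b_0>0$. For each $n\ge2$ observed data $Y_1,\dots,Y_n\in\mathbb R$ are given; $\bar Y=\frac1n\sum_iY_i$, $\Delta=\Delta_n=\sum_{i=1}^n(Y_i-\bar Y)^2$. Model: $Y_i\mid\theta_i\sim\mathcal N(\theta_i,V)$, $\theta_i\mid\mu,A\sim\mathcal N(\mu,A)$ independently ($1\le i\le n$), flat prior on $\mu\in\mathbb R$, $A\sim\mathrm{IG}(a,b_0)$ (density $\propto A^{-a-1}e^{-b_0/A}$ on $(0,\infty)$). The posterior $\pi$ on $\mathcal X=(0,\infty)\times\mathbb R\times\mathbb R^n$, $x=(A,\mu,\theta_1,\dots,\theta_n)$, has density $\propto A^{-a-1}e^{-b_0/A}\prod_{i=1}^n A^{-1/2}e^{-(\theta_i-\mu)^2/(2A)}e^{-(Y_i-\theta_i)^2/(2V)}$. Assumption (A): there are $\delta>0$, $M<\infty$ and an integer $N_0$ with $\frac{\Delta_n}{n-1}\le M$ for all $n$ and $\frac{\Delta_n}{n-1}\ge V+\delta$ for all $n\ge N_0$. *)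

theory Defs
  imports "HOL-Probability.Probability"
begin

text \<open>Data: for each sample size n, the observations are Y n 0, ..., Y n (n-1)
  (a triangular array; the paper's Y_1..Y_n, re-indexed from 0).\<close>

definition Ybar :: "(nat \<Rightarrow> nat \<Rightarrow> real) \<Rightarrow> nat \<Rightarrow> real" where
  "Ybar Y n = (\<Sum>i<n. Y n i) / real n"

definition Delta :: "(nat \<Rightarrow> nat \<Rightarrow> real) \<Rightarrow> nat \<Rightarrow> real" where
  "Delta Y n = (\<Sum>i<n. (Y n i - Ybar Y n)^2)"

text \<open>Unnormalised posterior density at x = (A, mu, theta), theta :: nat => real
  with coordinates theta 0, ..., theta (n-1); zero for A <= 0.\<close>

definition post_dens ::
  "real \<Rightarrow> real \<Rightarrow> real \<Rightarrow> (nat \<Rightarrow> nat \<Rightarrow> real) \<Rightarrow> nat \<Rightarrow> real \<times> real \<times> (nat \<Rightarrow> real) \<Rightarrow> real" where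
  "post_dens V a b0 Y n x = (case x of (A, mu, theta) \<Rightarrow>
     if A > 0 then
       A powr (-a - 1) * exp (- b0 / A) *
       (\<Prod>i<n. A powr (-1/2) * exp (- ((theta i - mu) ^ 2) / (2 * A))
                              * exp (- ((Y n i - theta i) ^ 2) / (2 * V)))
     else 0)"

definition state_space :: "nat \<Rightarrow> (real \<times> real \<times> (nat \<Rightarrow> real)) measure" where
  "state_space n = lborel \<Otimes>\<^sub>M (lborel \<Otimes>\<^sub>M PiM {..<n} (\<lambda>_. lborel))"

definition post_expect ::
  "real \<Rightarrow> real \<Rightarrow> real \<Rightarrow> (nat \<Rightarrow> nat \<Rightarrow> real) \<Rightarrow> nat
    \<Rightarrow> (real \<times> real \<times> (nat \<Rightarrow> real) \<Rightarrow> real) \<Rightarrow> ennreal" where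
  "post_expect V a b0 Y n f =
     (\<integral>\<^sup>+ x. ennreal (f x * post_dens V a b0 Y n x) \<partial>state_space n)
     / (\<integral>\<^sup>+ x. ennreal (post_dens V a b0 Y n x) \<partial>state_space n)"

end

theory Submission
  imports Defs
begin

lemma gauss_nn:
  fixes c m :: real assumes "c > 0"
  shows "(\<integral>\<^sup>+x. ennreal (exp (- (c * (x - m)^2))) \<partial>lborel) = ennreal (sqrt (pi / c))"
proof -
  define \<sigma> where "\<sigma> = sqrt (1 / (2*c))"
  have s: "\<sigma> > 0" "\<sigma>^2 = 1/(2*c)" using assms by (auto simp: \<sigma>_def)
  have 1: "(\<integral>\<^sup>+x. ennreal (normal_density m \<sigma> x) \<partial>lborel) = 1"
    using s by (subst nn_integral_eq_integral) auto
  have eq: "\<And>x. exp (- (c * (x - m)^2)) = sqrt (pi / c) * normal_density m \<sigma> x"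
  proof -
    fix x
    have a1: "sqrt (2 * pi * \<sigma>\<^sup>2) = sqrt (pi / c)" using s assms by (simp add: field_simps)
    have a2: "-(x - m)\<^sup>2/ (2 * \<sigma>\<^sup>2) = - (c * (x - m)^2)" using s assms by (simp add: field_simps)
    have a3: "sqrt (pi/c) > 0" using assms by simp
    show "exp (- (c * (x - m)^2)) = sqrt (pi / c) * normal_density m \<sigma> x"
      unfolding normal_density_def a1 a2 using a3 assms by simp
  qed
  show ?thesis
    unfolding eq using 1 assms
    by (subst ennreal_mult) (auto simp add: nn_integral_cmult)
qed

lemma phi_lower:
  fixes s t0 D :: real assumes "0 < s" "s \<le> t0" "t0 \<le> D"
  shows "ln t0 + D/t0 \<le> ln s + D/s"
proof -
  have t0: "t0 > 0" using assms by simp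
  have "ln t0 - ln s = ln (t0/s)" using assms t0 by (simp add: ln_div)
  also have "\<dots> \<le> t0/s - 1" using assms t0 by (intro ln_le_minus_one) simp
  also have "\<dots> = (t0 - s)/s" using assms by (simp add: field_simps)
  also have "\<dots> \<le> (D/t0) * ((t0 - s)/s)"
  proof -
    have h1: "1 \<le> D/t0" using assms t0 by simp
    have h2: "(t0 - s)/s \<ge> 0" using assms by simp
    show ?thesis using mult_right_mono[OF h1 h2] by simp
  qed
  also have "\<dots> = D/s - D/t0" using assms t0 by (simp add: field_simps)
  finally show ?thesis by simp
qed

lemma phi_gap:
  fixes t0 D u0 :: real assumes "t0 > 0" "u0 > 1" "D \<ge> u0 * t0"
  shows "ln D + 1 + (u0 - 1 - ln u0) \<le> ln t0 + D/t0"
proof -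
  define u where "u = D / t0"
  have u: "u \<ge> u0" using assms by (simp add: u_def field_simps)
  have D: "D = u * t0" using assms by (simp add: u_def)
  have upos: "u > 0" using u assms by simp
  have "ln u - ln u0 = ln (u/u0)" using upos assms by (simp add: ln_div)
  also have "\<dots> \<le> u/u0 - 1" using upos assms by (intro ln_le_minus_one) simp
  also have "\<dots> \<le> u - u0"
  proof -
    have "u/u0 - 1 = (u - u0)/u0" using assms by (simp add: field_simps)
    also have "\<dots> \<le> u - u0" using u assms by (simp add: divide_le_eq) (smt (verit) mult_le_cancel_left1)
    finally show ?thesis .
  qed
  finally have "ln u - ln u0 \<le> u - u0" .
  moreover have "ln D = ln u + ln t0" using D upos assms by (simp add: ln_mult)
  moreover have "D/t0 = u" using assms by (simp add: u_def)
  ultimately show ?thesis by simp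
qed

lemma phi_upper:
  fixes s D :: real assumes "0 < D" "D \<le> s"
  shows "ln s + D/s \<le> ln D + 1 + (s - D)/D"
proof -
  have "ln s - ln D = ln (s/D)" using assms by (simp add: ln_div)
  also have "\<dots> \<le> s/D - 1" using assms by (intro ln_le_minus_one) simp
  also have "\<dots> = (s - D)/D" using assms by (simp add: field_simps)
  finally have 1: "ln s - ln D \<le> (s - D)/D" .
  have "D/s \<le> 1" using assms by simp
  with 1 show ?thesis by simp
qed

lemma prior_bound:
  fixes A a b0 e :: real and k :: nat
  assumes "0 < A" "A \<le> e" "b0 > 0" "real k \<ge> a + 2" "k \<ge> 1"
  shows "A powr (-a-2) * exp (-b0/A) \<le> real k ^ k / b0 ^ k * e powr (real k - a - 2)"
proof -
  have "b0/(real k * A) \<le> exp (b0/(real k*A))" using exp_ge_add_one_self[of "b0/(real k*A)"] by linarith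
  then have "(b0/(real k * A))^k \<le> exp (b0/(real k*A))^k"
    using assms by (intro power_mono) auto
  also have "\<dots> = exp (b0/A)"
    using assms by (simp add: exp_of_nat_mult[symmetric])
  finally have 1: "(b0/(real k * A))^k \<le> exp (b0/A)" .
  have 2: "exp (-b0/A) \<le> (real k * A / b0)^k"
  proof -
    have pos: "(b0/(real k * A))^k > 0" using assms by simp
    have "exp (-b0/A) = 1 / exp (b0/A)" by (simp add: exp_minus field_simps)
    also have "\<dots> \<le> 1 / (b0/(real k * A))^k" using 1 pos by (intro divide_left_mono) auto
    also have "\<dots> = (real k * A / b0)^k" by (simp add: power_divide)
    finally show ?thesis .
  qed
  have "A powr (-a-2) * exp (-b0/A) \<le> A powr (-a-2) * (real k * A / b0)^k"
    using 2 by (intro mult_left_mono) auto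
  also have "\<dots> = real k ^ k / b0 ^ k * (A powr (-a-2) * A ^ k)"
    by (simp add: power_divide power_mult_distrib)
  also have "A powr (-a-2) * A ^ k = A powr (real k - a - 2)"
    using assms by (simp add: powr_realpow[symmetric] powr_add[symmetric] algebra_simps)
  also have "real k ^ k / b0 ^ k * A powr (real k - a - 2) \<le> real k ^ k / b0 ^ k * e powr (real k - a - 2)"
    using assms by (intro mult_left_mono powr_mono2) auto
  finally show ?thesis .
qed

lemma theta_int:
  fixes A V mu y :: real assumes A: "A > 0" and V: "V > 0"
  shows "(\<integral>\<^sup>+t. ennreal (A powr (-1/2) * exp (- ((t - mu) ^ 2) / (2 * A)) * exp (- ((y - t) ^ 2) / (2 * V))) \<partial>lborel)
     = ennreal (sqrt (2*pi*V) / sqrt (A+V) * exp (- ((y - mu)^2) / (2*(A+V))))"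
proof -
  define s where "s = A + V"
  define c where "c = s / (2*A*V)"
  define m where "m = (V*mu + A*y) / s"
  have s: "s > 0" "c > 0" using A V by (auto simp: s_def c_def)
  have tm: "t - m = (s * t - V * mu - A * y)/s" for t using s by (simp add: m_def field_simps)
  have poly: "V * s*(t-mu)^2 + A * s*(y-t)^2 = A * V*(y-mu)^2 + (s * t - V * mu - A * y)^2" for t
    unfolding s_def by (simp add: power2_eq_square algebra_simps)
  have L: "- ((t - mu) ^ 2) / (2 * A) + - ((y - t) ^ 2) / (2 * V) = -(V * s*(t-mu)^2 + A * s*(y-t)^2)/(2 * A * V * s)" for t
    using A V s by (simp add: field_simps)
  have R: "- ((y - mu)^2) / (2 * s) + - (c * (t - m)^2) = -(A * V*(y-mu)^2 + (s * t - V * mu - A * y)^2)/(2 * A * V * s)" for t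
    unfolding tm c_def using A V s by (simp add: field_simps power2_eq_square)
  have key: "\<And>t. - ((t - mu) ^ 2) / (2 * A) + - ((y - t) ^ 2) / (2 * V) = - ((y - mu)^2) / (2 * s) + - (c * (t - m)^2)"
    unfolding L R poly ..
  have pt: "\<And>t. A powr (-1/2) * exp (- ((t - mu) ^ 2) / (2 * A)) * exp (- ((y - t) ^ 2) / (2 * V))
     = (A powr (-1/2) * exp (- ((y - mu)^2) / (2* s))) * exp (- (c * (t - m)^2))"
  proof -
    fix t
    have "exp (- ((t - mu) ^ 2) / (2 * A)) * exp (- ((y - t) ^ 2) / (2 * V)) = exp (- ((y - mu)^2) / (2* s)) * exp (- (c * (t - m)^2))"
      unfolding exp_add[symmetric] key ..
    then show "A powr (-1/2) * exp (- ((t - mu) ^ 2) / (2 * A)) * exp (- ((y - t) ^ 2) / (2 * V))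
     = (A powr (-1/2) * exp (- ((y - mu)^2) / (2* s))) * exp (- (c * (t - m)^2))" by simp
  qed
  have val: "A powr (-1/2) * exp (- ((y - mu)^2) / (2* s)) * sqrt (pi / c) = sqrt (2*pi*V) / sqrt (A+V) * exp (- ((y - mu)^2) / (2*(A+V)))"
  proof -
    have "A powr (-1/2) = 1 / sqrt A" using A by (simp add: powr_minus_divide powr_half_sqrt)
    moreover have "sqrt (pi / c) = sqrt A * sqrt (2*pi*V) / sqrt s"
      using A V s unfolding c_def by (simp add: real_sqrt_divide real_sqrt_mult field_simps)
    ultimately show ?thesis using A unfolding s_def by (simp add: field_simps)
  qed
  have "(\<integral>\<^sup>+t. ennreal (A powr (-1/2) * exp (- ((t - mu) ^ 2) / (2 * A)) * exp (- ((y - t) ^ 2) / (2 * V))) \<partial>lborel)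
     = (\<integral>\<^sup>+t. ennreal (A powr (-1/2) * exp (- ((y - mu)^2) / (2* s))) * ennreal (exp (- (c * (t - m)^2))) \<partial>lborel)"
    unfolding pt by (subst ennreal_mult) auto
  also have "\<dots> = ennreal (A powr (-1/2) * exp (- ((y - mu)^2) / (2* s))) * ennreal (sqrt (pi / c))"
    using s by (simp add: nn_integral_cmult gauss_nn)
  also have "\<dots> = ennreal (A powr (-1/2) * exp (- ((y - mu)^2) / (2* s)) * sqrt (pi / c))"
    by (rule ennreal_mult[symmetric]) (use s in auto)
  also have "\<dots> = ennreal (sqrt (2*pi*V) / sqrt (A+V) * exp (- ((y - mu)^2) / (2*(A+V))))"
    unfolding val ..
  finally show ?thesis .
qed

lemma meas_pd: "(\<lambda>x. ennreal (post_dens V a b0 Y n x)) \<in> borel_measurable (state_space n)"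
  unfolding post_dens_def state_space_def by measurable

lemma meas_pd1: "(\<lambda>x. ennreal ((case x of (A, mu, theta) \<Rightarrow> 1 / A) * post_dens V a b0 Y n x)) \<in> borel_measurable (state_space n)"
  unfolding post_dens_def state_space_def by measurable

lemma meas_pd3: "(\<lambda>y. ennreal (post_dens V a b0 Y n (A, y))) \<in> borel_measurable (lborel \<Otimes>\<^sub>M PiM {..<n} (\<lambda>_. lborel))"
  using measurable_comp[OF measurable_Pair1'[of A lborel "lborel \<Otimes>\<^sub>M PiM {..<n} (\<lambda>_. lborel)"] meas_pd[unfolded state_space_def]]
  by (simp add: comp_def)
lemma meas_pd2: "(\<lambda>(mu,theta). ennreal (post_dens V a b0 Y n (A,mu,theta))) \<in> borel_measurable (lborel \<Otimes>\<^sub>M PiM {..<n} (\<lambda>_. lborel))"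
proof -
  have eq: "(\<lambda>(mu,theta). ennreal (post_dens V a b0 Y n (A,mu,theta))) = (\<lambda>y. ennreal (post_dens V a b0 Y n (A, y)))"
    by (auto simp: fun_eq_iff)
  show ?thesis unfolding eq by (rule meas_pd3)
qed

lemma psf: "product_sigma_finite (\<lambda>_::nat. lborel)"
  by (simp add: product_sigma_finite_def lborel.sigma_finite_measure_axioms)

lemma sf_PiM: "sigma_finite_measure (PiM {..<n} (\<lambda>_::nat. lborel))"
  by (rule product_sigma_finite.sigma_finite[OF psf]) simp

lemma sf_pair: "sigma_finite_measure (lborel \<Otimes>\<^sub>M PiM {..<n} (\<lambda>_::nat. lborel))"
  by (intro sigma_finite_pair_measure sf_PiM lborel.sigma_finite_measure_axioms)

lemma sumsq: "(\<Sum>i<n. (Y n i - mu)^2) = Delta Y n + real n * (mu - Ybar Y n)^2"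
proof (cases "n = 0")
  case True then show ?thesis by (simp add: Delta_def)
next
  case False
  have z: "(\<Sum>i<n. (Y n i - Ybar Y n)) = 0"
    using False by (simp add: sum_subtractf Ybar_def)
  have "(\<Sum>i<n. (Y n i - mu)^2) = (\<Sum>i<n. (Y n i - Ybar Y n)^2 + 2 * (Ybar Y n - mu) * (Y n i - Ybar Y n) + (mu - Ybar Y n)^2)"
    by (intro sum.cong) (auto simp: power2_eq_square algebra_simps)
  also have "\<dots> = Delta Y n + 2 * (Ybar Y n - mu) * (\<Sum>i<n. (Y n i - Ybar Y n)) + real n * (mu - Ybar Y n)^2"
    by (simp add: sum.distrib sum_distrib_left Delta_def)
  finally show ?thesis using z by simp
qed

definition Gf :: "real \<Rightarrow> real \<Rightarrow> real \<Rightarrow> (nat \<Rightarrow> nat \<Rightarrow> real) \<Rightarrow> nat \<Rightarrow> real \<Rightarrow> real" where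
  "Gf V a b0 Y n A = A powr (-a-1) * exp (-b0/A) * (sqrt (2*pi*V) / sqrt (A+V))^n
      * exp (- Delta Y n / (2*(A+V))) * sqrt (2*pi*(A+V)/n)"

lemma inner_int:
  assumes A: "A > 0" and V: "V > 0" and n: "n \<ge> 1"
  shows "(\<integral>\<^sup>+y. ennreal (post_dens V a b0 Y n (A, y)) \<partial>(lborel \<Otimes>\<^sub>M PiM {..<n} (\<lambda>_. lborel)))
     = ennreal (Gf V a b0 Y n A)"
proof -
  interpret PS: sigma_finite_measure "PiM {..<n} (\<lambda>_::nat. lborel)" by (rule sf_PiM)
  interpret PP: product_sigma_finite "\<lambda>_::nat. lborel" by (rule psf)
  define P where "P = A powr (-a-1) * exp (-b0/A)"
  define s where "s = A + V"
  define k where "k = sqrt (2*pi*V) / sqrt s"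
  define q where "q mu i t = A powr (-1/2) * exp (- ((t - mu) ^ 2) / (2 * A)) * exp (- ((Y n i - t) ^ 2) / (2 * V))" for mu i t
  have P0: "P \<ge> 0" unfolding P_def by simp
  have s0: "s > 0" using A V by (simp add: s_def)
  have k0: "k \<ge> 0" unfolding k_def using V s0 by (auto intro!: divide_nonneg_nonneg)
  have pd: "post_dens V a b0 Y n (A, mu, th) = P * (\<Prod>i<n. q mu i (th i))" for mu th
    using A by (simp add: post_dens_def P_def q_def)
  have "(\<integral>\<^sup>+y. ennreal (post_dens V a b0 Y n (A, y)) \<partial>(lborel \<Otimes>\<^sub>M PiM {..<n} (\<lambda>_. lborel)))
      = integral\<^sup>N (lborel \<Otimes>\<^sub>M PiM {..<n} (\<lambda>_. lborel)) (\<lambda>(mu,th). ennreal (post_dens V a b0 Y n (A, mu, th)))"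
    by (rule nn_integral_cong) auto
  also have "\<dots> = (\<integral>\<^sup>+mu. \<integral>\<^sup>+th. (\<lambda>(mu,th). ennreal (post_dens V a b0 Y n (A, mu, th))) (mu, th) \<partial>PiM {..<n} (\<lambda>_. lborel) \<partial>lborel)"
    by (rule PS.nn_integral_fst[OF meas_pd2, symmetric])
  also have "\<dots> = (\<integral>\<^sup>+mu. ennreal (P * k^n * exp (- (\<Sum>i<n. (Y n i - mu)^2) / (2* s))) \<partial>lborel)"
  proof (intro nn_integral_cong)
    fix mu :: real
    have "(\<integral>\<^sup>+th. (\<lambda>(mu,th). ennreal (post_dens V a b0 Y n (A, mu, th))) (mu, th) \<partial>PiM {..<n} (\<lambda>_. lborel))
        = (\<integral>\<^sup>+th. ennreal P * (\<Prod>i\<in>{..<n}. ennreal (q mu i (th i))) \<partial>PiM {..<n} (\<lambda>_. lborel))"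
    proof (intro nn_integral_cong)
      fix th :: "nat \<Rightarrow> real"
      have q0: "\<And>i. q mu i (th i) \<ge> 0" by (simp add: q_def)
      show "(\<lambda>(mu,th). ennreal (post_dens V a b0 Y n (A, mu, th))) (mu, th) = ennreal P * (\<Prod>i\<in>{..<n}. ennreal (q mu i (th i)))"
        using q0 P0 by (simp add: pd prod_ennreal ennreal_mult prod_nonneg)
    qed
    also have "\<dots> = ennreal P * (\<Prod>i\<in>{..<n}. \<integral>\<^sup>+t. ennreal (q mu i t) \<partial>lborel)"
    proof -
      have m: "(\<lambda>th. \<Prod>i\<in>{..<n}. ennreal (q mu i (th i))) \<in> borel_measurable (PiM {..<n} (\<lambda>_. lborel))"
        unfolding q_def by measurable
      have e: "(\<integral>\<^sup>+th. (\<Prod>i\<in>{..<n}. ennreal (q mu i (th i))) \<partial>PiM {..<n} (\<lambda>_. lborel)) = (\<Prod>i\<in>{..<n}. \<integral>\<^sup>+t. ennreal (q mu i t) \<partial>lborel)"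
        by (rule PP.product_nn_integral_prod[where f="\<lambda>i t. ennreal (q mu i t)"]) (auto simp: q_def)
      show ?thesis using m e by (simp add: nn_integral_cmult)
    qed
    also have "\<dots> = ennreal P * (\<Prod>i\<in>{..<n}. ennreal (k * exp (- ((Y n i - mu)^2) / (2* s))))"
      by (intro arg_cong[where f="\<lambda>x. ennreal P * x"] prod.cong refl) (simp only: q_def k_def s_def theta_int[OF A V])
    also have "\<dots> = ennreal P * ennreal (\<Prod>i\<in>{..<n}. k * exp (- ((Y n i - mu)^2) / (2* s)))"
      by (subst prod_ennreal) (use k0 in auto)
    also have "\<dots> = ennreal (P * (\<Prod>i\<in>{..<n}. k * exp (- ((Y n i - mu)^2) / (2* s))))"
      by (rule ennreal_mult[symmetric, OF P0 prod_nonneg]) (use k0 in auto)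
    also have "(\<Prod>i\<in>{..<n}. k * exp (- ((Y n i - mu)^2) / (2* s))) = k^n * exp (- (\<Sum>i<n. (Y n i - mu)^2) / (2* s))"
      by (simp add: prod.distrib exp_sum[symmetric] sum_negf sum_divide_distrib)
    finally show "(\<integral>\<^sup>+th. (\<lambda>(mu,th). ennreal (post_dens V a b0 Y n (A, mu, th))) (mu, th) \<partial>PiM {..<n} (\<lambda>_. lborel))
       = ennreal (P * k^n * exp (- (\<Sum>i<n. (Y n i - mu)^2) / (2* s)))" by (simp add: mult.assoc)
  qed
  also have "\<dots> = (\<integral>\<^sup>+mu. ennreal (P * k^n * exp (- Delta Y n / (2* s))) * ennreal (exp (- ((real n / (2* s)) * (mu - Ybar Y n)^2))) \<partial>lborel)"
  proof (intro nn_integral_cong)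
    fix mu
    have "- (\<Sum>i<n. (Y n i - mu)^2) / (2* s) = - Delta Y n / (2* s) + - ((real n / (2* s)) * (mu - Ybar Y n)^2)"
      unfolding sumsq using s0 by (simp add: field_simps)
    then have E: "exp (- (\<Sum>i<n. (Y n i - mu)^2) / (2* s)) = exp (- Delta Y n / (2* s)) * exp (- ((real n / (2* s)) * (mu - Ybar Y n)^2))"
      by (simp add: exp_add[symmetric])
    have E2: "P * k^n * exp (- (\<Sum>i<n. (Y n i - mu)^2) / (2* s)) = (P * k^n * exp (- Delta Y n / (2* s))) * exp (- ((real n / (2* s)) * (mu - Ybar Y n)^2))"
      unfolding E by (simp only: mult.assoc)
    show "ennreal (P * k^n * exp (- (\<Sum>i<n. (Y n i - mu)^2) / (2* s))) = ennreal (P * k^n * exp (- Delta Y n / (2* s))) * ennreal (exp (- ((real n / (2* s)) * (mu - Ybar Y n)^2)))"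
      unfolding E2 by (rule ennreal_mult) (use P0 k0 in auto)
  qed
  also have "\<dots> = ennreal (P * k^n * exp (- Delta Y n / (2* s))) * ennreal (sqrt (pi / (real n / (2* s))))"
  proof -
    have m: "(\<lambda>mu. ennreal (exp (- ((real n / (2* s)) * (mu - Ybar Y n)^2)))) \<in> borel_measurable lborel" by measurable
    have g: "(\<integral>\<^sup>+mu. ennreal (exp (- ((real n / (2* s)) * (mu - Ybar Y n)^2))) \<partial>lborel) = ennreal (sqrt (pi / (real n / (2* s))))"
      by (rule gauss_nn) (use n s0 in simp)
    show ?thesis by (simp only: nn_integral_cmult[OF m] g)
  qed
  also have "\<dots> = ennreal (Gf V a b0 Y n A)"
  proof -
    have e: "pi / (real n / (2*(A+V))) = 2*pi*(A+V)/n" by simp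
    have nn: "0 \<le> P * k^n * exp (- Delta Y n / (2* s))" using P0 k0 by simp
    have "ennreal (P * k^n * exp (- Delta Y n / (2* s))) * ennreal (sqrt (pi / (real n / (2* s))))
        = ennreal (P * k^n * exp (- Delta Y n / (2* s)) * sqrt (pi / (real n / (2* s))))"
      by (rule ennreal_mult[symmetric]) (use nn s0 in \<open>auto intro!: divide_nonneg_nonneg\<close>)
    also have "P * k^n * exp (- Delta Y n / (2* s)) * sqrt (pi / (real n / (2* s))) = Gf V a b0 Y n A"
      unfolding Gf_def P_def k_def s_def e ..
    finally show ?thesis .
  qed
  finally show ?thesis .
qed

definition Qf :: "real \<Rightarrow> real \<Rightarrow> real \<Rightarrow> real \<Rightarrow> real \<Rightarrow> real \<Rightarrow> real" where
  "Qf V a b0 m D A = A powr (-a-1) * exp (-b0/A) * exp (-(m/2) * (ln (A+V) + D/(A+V)))"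

lemma Qf_nonneg: "Qf V a b0 m D A \<ge> 0" by (simp add: Qf_def)

lemma meas_f0: "(\<lambda>A. ennreal (if A > 0 then Qf V a b0 m D A else 0)) \<in> borel_measurable lborel"
  unfolding Qf_def by measurable
lemma meas_f1: "(\<lambda>A. ennreal (if A > 0 then 1/A * Qf V a b0 m D A else 0)) \<in> borel_measurable lborel"
  unfolding Qf_def by measurable

lemma oneD:
  fixes V a b0 \<delta> M :: real
  assumes V: "V > 0" and a: "a > 0" and b0: "b0 > 0" and d: "\<delta> > 0"
  shows "\<exists>N. \<forall>m D. m \<ge> N \<longrightarrow> V+\<delta> \<le> D \<longrightarrow> D \<le> M \<longrightarrow>
    (\<integral>\<^sup>+A. ennreal (if A > 0 then 1/A * Qf V a b0 m D A else 0) \<partial>lborel)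
      \<le> ennreal (2/\<delta>) * (\<integral>\<^sup>+A. ennreal (if A > 0 then Qf V a b0 m D A else 0) \<partial>lborel)"
proof -
  define t0 where "t0 = V + \<delta>/2"
  define u0 where "u0 = (V+\<delta>)/t0"
  define \<gamma> where "\<gamma> = u0 - 1 - ln u0"
  define c where "c = V*\<gamma>/2"
  define k where "k = nat \<lceil>a+2\<rceil>"
  define C1 where "C1 = real k ^ k / b0 ^ k * (\<delta>/2) powr (real k - a - 2)"
  define L where "L = max (M - V + c) \<delta>"
  define C2 where "C2 = L powr (-a-1) * exp (-b0/\<delta>)"
  define N where "N = max 1 (2*C1*\<delta>^2/(C2*c*\<gamma>))"
  have t0: "t0 > 0" using V d by (simp add: t0_def)
  have u0: "u0 > 1" using V d by (simp add: u0_def t0_def field_simps)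
  have g: "\<gamma> > 0" unfolding \<gamma>_def using u0 by (smt (verit) ln_eq_minus_one ln_le_minus_one)
  have c: "c > 0" using V g by (simp add: c_def)
  have k1: "real k \<ge> a + 2" using a by (auto simp: k_def)
  then have "real k > 0" using a by linarith
  then have k: "real k \<ge> a + 2" "k \<ge> 1" using k1 by auto
  have C1: "C1 > 0" using b0 d k by (simp add: C1_def)
  have L: "L > 0" using d by (simp add: L_def)
  have C2: "C2 > 0" using L by (simp add: C2_def)
  show ?thesis
  proof (intro exI[of _ N] allI impI)
    fix m D :: real
    assume mN: "m \<ge> N" and D1: "V + \<delta> \<le> D" and D2: "D \<le> M"
    have m: "m \<ge> 1" using mN by (simp add: N_def)
    have Dpos: "D > 0" using D1 V d by simp
    define e1 where "e1 = exp (-(m/2) * (ln D + 1 + \<gamma>))"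
    define e2 where "e2 = exp (-(m/2) * (ln D + 1 + \<gamma>/2))"
    define T where "T = {0<..<\<delta>/2}"
    define J where "J = {D-V..D-V+c}"
    define f0 where "f0 A = ennreal (if A > 0 then Qf V a b0 m D A else 0)" for A
    define f1 where "f1 A = ennreal (if A > 0 then 1/A * Qf V a b0 m D A else 0)" for A
    have mf0[measurable]: "f0 \<in> borel_measurable lborel" unfolding f0_def by (rule meas_f0)
    have mf1[measurable]: "f1 \<in> borel_measurable lborel" unfolding f1_def by (rule meas_f1)
    have pT: "1/A * Qf V a b0 m D A \<le> C1 * e1" if A: "A \<in> T" for A
    proof -
      have A0: "A > 0" "A \<le> \<delta>/2" using A by (auto simp: T_def)
      have pw: "1/A * A powr (-a-1) = A powr (-a-2)"
      proof -
        have "A powr (-a-1) = A powr (-a-2) * A powr 1" by (subst powr_add[symmetric]) (rule arg_cong[where f="\<lambda>t. A powr t"], simp)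
        then show ?thesis using A0 by simp
      qed
      have "ln t0 + D/t0 \<le> ln (A+V) + D/(A+V)"
        using A0 V D1 by (intro phi_lower) (auto simp: t0_def)
      moreover have "ln D + 1 + \<gamma> \<le> ln t0 + D/t0"
        unfolding \<gamma>_def using t0 u0 D1 by (intro phi_gap) (auto simp: u0_def)
      ultimately have "-(m/2) * (ln (A+V) + D/(A+V)) \<le> -(m/2) * (ln D + 1 + \<gamma>)"
        using m by (intro mult_left_mono_neg) auto
      then have ex: "exp (-(m/2) * (ln (A+V) + D/(A+V))) \<le> e1" unfolding e1_def by simp
      have pb: "A powr (-a-2) * exp (-b0/A) \<le> C1"
        unfolding C1_def using A0 b0 k by (intro prior_bound) auto
      have "1/A * Qf V a b0 m D A = (A powr (-a-2) * exp (-b0/A)) * exp (-(m/2) * (ln (A+V) + D/(A+V)))"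
        unfolding Qf_def pw[symmetric] by simp
      also have "\<dots> \<le> C1 * e1" using pb ex C1 by (intro mult_mono) auto
      finally show ?thesis .
    qed
    have pJ: "C2 * e2 \<le> Qf V a b0 m D A" if A: "A \<in> J" for A
    proof -
      have A0: "A \<ge> \<delta>" "A \<ge> D - V" "A \<le> D - V + c" using A D1 by (auto simp: J_def)
      have Apos: "A > 0" using A0 d by simp
      have h1: "ln (A+V) + D/(A+V) \<le> ln D + 1 + ((A+V) - D)/D"
        using Dpos A0 by (intro phi_upper) auto
      have h2: "((A+V) - D)/D \<le> \<gamma>/2"
      proof -
        have "((A+V) - D)/D \<le> c/D" using A0 Dpos by (intro divide_right_mono) auto
        also have "\<dots> \<le> c/V" using c V D1 d by (intro divide_left_mono) auto
        also have "\<dots> = \<gamma>/2" using V by (simp add: c_def)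
        finally show ?thesis .
      qed
      have "ln (A+V) + D/(A+V) \<le> ln D + 1 + \<gamma>/2" using h1 h2 by linarith
      then have "-(m/2) * (ln D + 1 + \<gamma>/2) \<le> -(m/2) * (ln (A+V) + D/(A+V))"
        using m by (intro mult_left_mono_neg) auto
      then have ex: "e2 \<le> exp (-(m/2) * (ln (A+V) + D/(A+V)))" unfolding e2_def by simp
      have p1: "L powr (-a-1) \<le> A powr (-a-1)"
        using Apos A0 a D2 by (intro powr_mono2') (auto simp: L_def)
      have p2: "exp (-b0/\<delta>) \<le> exp (-b0/A)"
        using A0 d b0 by (simp add: frac_le)
      have "C2 \<le> A powr (-a-1) * exp (-b0/A)"
        unfolding C2_def using p1 p2 by (intro mult_mono) auto
      then show ?thesis unfolding Qf_def using ex C2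
        by (intro mult_mono) (auto simp: e2_def)
    qed
    have num: "C1 * e1 * (\<delta>/2) \<le> C2 * e2 / \<delta> * c"
    proof -
      define E where "E = exp (-(m*\<gamma>/4))"
      have e1E: "e1 = E * e2" unfolding e1_def e2_def E_def by (simp add: exp_add[symmetric] algebra_simps)
      have mg: "m*\<gamma>/4 > 0" using m g by simp
      have "m*\<gamma>/4 \<le> exp (m*\<gamma>/4)" using exp_ge_add_one_self[of "m*\<gamma>/4"] by linarith
      then have "E * (m*\<gamma>/4) \<le> E * exp (m*\<gamma>/4)" by (intro mult_left_mono) (auto simp: E_def)
      also have "\<dots> = 1" by (simp add: E_def exp_minus field_simps)
      finally have E1: "E * (m*\<gamma>/4) \<le> 1" .
      have mN2: "2*C1*\<delta>^2/(C2*c*\<gamma>) \<le> m" using mN by (simp add: N_def)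
      then have "2*C1*\<delta>^2 \<le> m * (C2*c*\<gamma>)" using C2 c g by (simp add: divide_le_eq)
      have Eb: "E \<le> 1 / (m*\<gamma>/4)" using E1 mg by (simp add: le_divide_eq)
      have "C1 * E * (\<delta>/2) \<le> C1 * (1 / (m*\<gamma>/4)) * (\<delta>/2)"
        using Eb C1 d by (intro mult_right_mono mult_left_mono) auto
      also have "\<dots> = 2*C1*\<delta>^2 / (m*\<gamma>) / \<delta>" using d by (simp add: field_simps power2_eq_square)
      also have "\<dots> \<le> (m * (C2*c*\<gamma>)) / (m*\<gamma>) / \<delta>"
        using \<open>2*C1*\<delta>^2 \<le> m * (C2*c*\<gamma>)\<close> mg d by (intro divide_right_mono) auto
      also have "\<dots> = C2 * c / \<delta>" using mg m g by (simp add: field_simps)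
      finally have "C1 * E * (\<delta>/2) \<le> C2 * c / \<delta>" .
      then have "(C1 * E * (\<delta>/2)) * e2 \<le> (C2 * c / \<delta>) * e2" by (intro mult_right_mono) (auto simp: e2_def)
      then show ?thesis unfolding e1E by (simp add: algebra_simps)
    qed
    have IT: "(\<integral>\<^sup>+A. f1 A * indicator T A \<partial>lborel) \<le> (\<integral>\<^sup>+A. ennreal (1/\<delta>) * f0 A * indicator J A \<partial>lborel)"
    proof -
      have "(\<integral>\<^sup>+A. f1 A * indicator T A \<partial>lborel) \<le> (\<integral>\<^sup>+A. ennreal (C1 * e1) * indicator T A \<partial>lborel)"
      proof (intro nn_integral_mono)
        fix A show "f1 A * indicator T A \<le> ennreal (C1 * e1) * indicator T A"
          using pT[of A] by (cases "A \<in> T") (auto simp: f1_def T_def intro!: ennreal_leI)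
      qed
      also have "\<dots> = ennreal (C1 * e1) * ennreal (\<delta>/2)" using d by (subst nn_integral_cmult_indicator) (auto simp: T_def)
      also have "\<dots> = ennreal (C1 * e1 * (\<delta>/2))" using C1 d by (subst ennreal_mult[symmetric]) (auto simp: e1_def)
      also have "\<dots> \<le> ennreal (C2 * e2 / \<delta> * c)" using num by (rule ennreal_leI)
      also have "\<dots> = ennreal (C2 * e2 / \<delta>) * ennreal c" using C2 c d by (subst ennreal_mult[symmetric]) (auto simp: e2_def)
      also have "\<dots> = (\<integral>\<^sup>+A. ennreal (C2 * e2 / \<delta>) * indicator J A \<partial>lborel)" using c by (subst nn_integral_cmult_indicator) (auto simp: J_def)
      also have "\<dots> \<le> (\<integral>\<^sup>+A. ennreal (1/\<delta>) * f0 A * indicator J A \<partial>lborel)"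
      proof (intro nn_integral_mono)
        fix A
        show "ennreal (C2 * e2 / \<delta>) * indicator J A \<le> ennreal (1/\<delta>) * f0 A * indicator J A"
        proof (cases "A \<in> J")
          case True
          then have Apos: "A > 0" using D1 d by (auto simp: J_def)
          have "C2 * e2 / \<delta> \<le> 1/\<delta> * Qf V a b0 m D A" using pJ[OF True] d by (simp add: divide_right_mono)
          then show ?thesis using True Apos d Qf_nonneg
            by (simp add: f0_def ennreal_mult[symmetric] ennreal_leI)
        qed simp
      qed
      finally show ?thesis .
    qed
    have pw: "f1 A \<le> f1 A * indicator T A + ennreal (2/\<delta>) * f0 A * indicator (-J) A + ennreal (1/\<delta>) * f0 A * indicator J A" for A
    proof (cases "A \<in> T")
      case True then show ?thesis by simp
    next
      case False
      show ?thesis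
      proof (cases "A > 0")
        case False then show ?thesis by (simp add: f1_def)
      next
        case True
        with \<open>A \<notin> T\<close> have A2: "A \<ge> \<delta>/2" by (auto simp: T_def)
        have Q0: "Qf V a b0 m D A \<ge> 0" by (rule Qf_nonneg)
        show ?thesis
        proof (cases "A \<in> J")
          case True
          then have "A \<ge> \<delta>" using D1 by (auto simp: J_def)
          then have "1/A \<le> 1/\<delta>" using d by (simp add: frac_le)
          then have "1/A * Qf V a b0 m D A \<le> 1/\<delta> * Qf V a b0 m D A" using Q0 by (intro mult_right_mono)
          then have "f1 A \<le> ennreal (1/\<delta>) * f0 A" using \<open>A > 0\<close> d Q0
            by (simp add: f1_def f0_def ennreal_mult[symmetric] ennreal_leI)
          then show ?thesis using True \<open>A \<notin> T\<close> by simp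
        next
          case False
          have "1/A \<le> 2/\<delta>" using d A2 True by (simp add: field_simps)
          then have "1/A * Qf V a b0 m D A \<le> 2/\<delta> * Qf V a b0 m D A" using Q0 by (intro mult_right_mono)
          then have "f1 A \<le> ennreal (2/\<delta>) * f0 A" using \<open>A > 0\<close> d Q0
            by (simp add: f1_def f0_def ennreal_mult[symmetric] ennreal_leI)
          then show ?thesis using False \<open>A \<notin> T\<close> by simp
        qed
      qed
    qed
    have mT[measurable]: "T \<in> sets lborel" "J \<in> sets lborel" "-J \<in> sets lborel" by (auto simp: T_def J_def)
    define Z where "Z = (\<integral>\<^sup>+A. f0 A * indicator (-J) A \<partial>lborel)"
    define Yj where "Yj = (\<integral>\<^sup>+A. f0 A * indicator J A \<partial>lborel)"
    have "(\<integral>\<^sup>+A. f1 A \<partial>lborel) \<le> (\<integral>\<^sup>+A. f1 A * indicator T A + ennreal (2/\<delta>) * f0 A * indicator (-J) A + ennreal (1/\<delta>) * f0 A * indicator J A \<partial>lborel)"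
      by (intro nn_integral_mono pw)
    also have "\<dots> = (\<integral>\<^sup>+A. f1 A * indicator T A \<partial>lborel) + (\<integral>\<^sup>+A. ennreal (2/\<delta>) * f0 A * indicator (-J) A \<partial>lborel) + (\<integral>\<^sup>+A. ennreal (1/\<delta>) * f0 A * indicator J A \<partial>lborel)"
      by (simp add: nn_integral_add)
    also have "\<dots> \<le> (\<integral>\<^sup>+A. ennreal (1/\<delta>) * f0 A * indicator J A \<partial>lborel) + (\<integral>\<^sup>+A. ennreal (2/\<delta>) * f0 A * indicator (-J) A \<partial>lborel) + (\<integral>\<^sup>+A. ennreal (1/\<delta>) * f0 A * indicator J A \<partial>lborel)"
      using IT by (intro add_mono) auto
    also have "\<dots> = ennreal (1/\<delta>) * Yj + ennreal (2/\<delta>) * Z + ennreal (1/\<delta>) * Yj"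
      unfolding Yj_def Z_def by (simp add: nn_integral_cmult mult.assoc)
    also have "\<dots> = ennreal (2/\<delta>) * (Z + Yj)"
    proof -
      have "ennreal (1/\<delta>) * Yj + ennreal (1/\<delta>) * Yj = ennreal (2/\<delta>) * Yj"
        using d by (simp add: distrib_right[symmetric] ennreal_plus[symmetric] del: ennreal_plus)
      then show ?thesis by (simp add: distrib_left algebra_simps)
    qed
    also have "Z + Yj = (\<integral>\<^sup>+A. f0 A \<partial>lborel)"
    proof -
      have "Z + Yj = (\<integral>\<^sup>+A. f0 A * indicator (-J) A + f0 A * indicator J A \<partial>lborel)"
        unfolding Z_def Yj_def by (simp add: nn_integral_add)
      also have "\<dots> = (\<integral>\<^sup>+A. f0 A \<partial>lborel)"
        by (intro nn_integral_cong) (auto simp: indicator_def)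
      finally show ?thesis .
    qed
    finally show "(\<integral>\<^sup>+A. ennreal (if A > 0 then 1/A * Qf V a b0 m D A else 0) \<partial>lborel)
      \<le> ennreal (2/\<delta>) * (\<integral>\<^sup>+A. ennreal (if A > 0 then Qf V a b0 m D A else 0) \<partial>lborel)"
      unfolding f0_def f1_def .
  qed
qed

lemma ennreal_div_le_of: "(x::ennreal) \<le> c * y \<Longrightarrow> x / y \<le> c"
proof (cases "y = 0")
  case True then show "x \<le> c * y \<Longrightarrow> x / y \<le> c" by simp
next
  case F: False
  assume h: "x \<le> c * y"
  show ?thesis
  proof (cases "y = top")
    case True then show ?thesis by simp
  next
    case False then show ?thesis using F h by (metis divide_right_mono_ennreal mult_divide_eq_ennreal)
  qed
qed

lemma rearr: "(x::real) * q = K * w \<Longrightarrow> p * x * e * q = K * (p * (w * e))"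
proof -
  assume h: "x * q = K * w"
  have "p * x * e * q = p * e * (x * q)" by (simp add: ac_simps)
  also have "\<dots> = p * e * (K * w)" using h by simp
  also have "\<dots> = K * (p * (w * e))" by (simp add: ac_simps)
  finally show ?thesis .
qed

lemma Gf_Qf:
  assumes A: "A > 0" and V: "V > 0" and n: "n \<ge> 2"
  shows "Gf V a b0 Y n A = (sqrt (2*pi*V)^n * sqrt (2*pi/n)) * Qf V a b0 (real n - 1) (Delta Y n / (real n - 1)) A"
proof -
  define s where "s = A + V"
  have s: "s > 0" using A V by (simp add: s_def)
  have m: "real n - 1 > 0" using n by simp
  have e1: "exp (-((real n - 1)/2) * (ln s + (Delta Y n / (real n - 1))/s)) = exp (-((real n - 1)/2) * ln s) * exp (- Delta Y n / (2* s))"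
    using m s by (simp add: exp_add[symmetric] field_simps)
  have e2: "exp (-((real n - 1)/2) * ln s) = 1 / sqrt s ^ (n - 1)"
  proof -
    have "-((real n - 1)/2) * ln s = - (real (n-1) * ln (sqrt s))" using s n by (simp add: ln_sqrt of_nat_diff field_simps)
    then have "exp (-((real n - 1)/2) * ln s) = inverse (exp (real (n-1) * ln (sqrt s)))" by (simp add: exp_minus)
    also have "\<dots> = inverse (sqrt s ^ (n-1))" using s by (simp add: exp_of_nat_mult)
    finally show ?thesis by (simp add: field_simps)
  qed
  have e3: "(sqrt (2*pi*V) / sqrt s)^n * sqrt (2*pi* s/n) = sqrt (2*pi*V)^n * sqrt (2*pi/n) * (1 / sqrt s ^ (n - 1))"
  proof -
    obtain j where j: "n = Suc j" using n by (cases n) auto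
    have sq: "sqrt (2*pi* s/n) = sqrt (2*pi/n) * sqrt s" by (simp add: real_sqrt_mult[symmetric])
    have "(sqrt (2*pi*V) / sqrt s)^n = sqrt (2*pi*V)^n / (sqrt s ^ j * sqrt s)"
      unfolding j by (simp add: power_divide)
    then have "(sqrt (2*pi*V) / sqrt s)^n * sqrt (2*pi* s/n) = sqrt (2*pi*V)^n / (sqrt s ^ j * sqrt s) * (sqrt (2*pi/n) * sqrt s)"
      unfolding sq by simp
    also have "\<dots> = sqrt (2*pi*V)^n * sqrt (2*pi/n) * (1 / sqrt s ^ j)"
      using s by (simp add: field_simps)
    finally show ?thesis unfolding j by simp
  qed
  show ?thesis unfolding Gf_def Qf_def s_def[symmetric] e1 e2
    by (rule rearr[OF e3])
qed

lemma pd_nonneg: "post_dens V a b0 Y n x \<ge> 0"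
  by (auto simp: post_dens_def split: prod.splits intro!: prod_nonneg mult_nonneg_nonneg)

lemma outer_int:
  assumes V: "V > 0" and n: "n \<ge> 2"
  shows "(\<integral>\<^sup>+x. ennreal (post_dens V a b0 Y n x) \<partial>state_space n)
      = ennreal (sqrt (2*pi*V)^n * sqrt (2*pi/n)) * (\<integral>\<^sup>+A. ennreal (if A > 0 then Qf V a b0 (real n - 1) (Delta Y n / (real n - 1)) A else 0) \<partial>lborel)"
    (is "?L = ennreal ?K * ?R")
  and "(\<integral>\<^sup>+x. ennreal ((case x of (A, mu, theta) \<Rightarrow> 1 / A) * post_dens V a b0 Y n x) \<partial>state_space n)
      = ennreal (sqrt (2*pi*V)^n * sqrt (2*pi/n)) * (\<integral>\<^sup>+A. ennreal (if A > 0 then 1/A * Qf V a b0 (real n - 1) (Delta Y n / (real n - 1)) A else 0) \<partial>lborel)"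
proof -
  interpret PP: sigma_finite_measure "lborel \<Otimes>\<^sub>M PiM {..<n} (\<lambda>_::nat. lborel)" by (rule sf_pair)
  define K where "K = sqrt (2*pi*V)^n * sqrt (2*pi/n)"
  have K: "K \<ge> 0" unfolding K_def using V by simp
  have n1: "n \<ge> 1" using n by simp
  have pd0: "post_dens V a b0 Y n (A, y) = 0" if "\<not> A > 0" for A y
    using that by (simp add: post_dens_def)
  have inner0: "(\<integral>\<^sup>+y. ennreal (post_dens V a b0 Y n (A, y)) \<partial>(lborel \<Otimes>\<^sub>M PiM {..<n} (\<lambda>_. lborel)))
      = ennreal K * ennreal (if A > 0 then Qf V a b0 (real n - 1) (Delta Y n / (real n - 1)) A else 0)" for A
  proof (cases "A > 0")
    case True
    have "(\<integral>\<^sup>+y. ennreal (post_dens V a b0 Y n (A, y)) \<partial>(lborel \<Otimes>\<^sub>M PiM {..<n} (\<lambda>_. lborel))) = ennreal (Gf V a b0 Y n A)"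
      by (rule inner_int[OF True V n1])
    also have "\<dots> = ennreal (K * Qf V a b0 (real n - 1) (Delta Y n / (real n - 1)) A)"
      unfolding Gf_Qf[OF True V n] K_def ..
    also have "\<dots> = ennreal K * ennreal (Qf V a b0 (real n - 1) (Delta Y n / (real n - 1)) A)"
      by (rule ennreal_mult[OF K Qf_nonneg])
    finally show ?thesis using True by simp
  next
    case False then show ?thesis by (simp add: pd0)
  qed
  have "?L = (\<integral>\<^sup>+A. \<integral>\<^sup>+y. ennreal (post_dens V a b0 Y n (A, y)) \<partial>(lborel \<Otimes>\<^sub>M PiM {..<n} (\<lambda>_. lborel)) \<partial>lborel)"
    unfolding state_space_def by (rule PP.nn_integral_fst[symmetric]) (rule meas_pd[unfolded state_space_def])
  also have "\<dots> = ennreal K * ?R"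
    unfolding inner0 by (rule nn_integral_cmult[OF meas_f0])
  finally show "?L = ennreal ?K * ?R" unfolding K_def .
  have inner1: "(\<integral>\<^sup>+y. ennreal ((case (A, y) of (A, mu, theta) \<Rightarrow> 1 / A) * post_dens V a b0 Y n (A, y)) \<partial>(lborel \<Otimes>\<^sub>M PiM {..<n} (\<lambda>_. lborel)))
      = ennreal K * ennreal (if A > 0 then 1/A * Qf V a b0 (real n - 1) (Delta Y n / (real n - 1)) A else 0)" for A
  proof (cases "A > 0")
    case True
    let ?Q = "Qf V a b0 (real n - 1) (Delta Y n / (real n - 1)) A"
    have "(\<integral>\<^sup>+y. ennreal ((case (A, y) of (A, mu, theta) \<Rightarrow> 1 / A) * post_dens V a b0 Y n (A, y)) \<partial>(lborel \<Otimes>\<^sub>M PiM {..<n} (\<lambda>_. lborel)))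
       = (\<integral>\<^sup>+y. ennreal (1/A) * ennreal (post_dens V a b0 Y n (A, y)) \<partial>(lborel \<Otimes>\<^sub>M PiM {..<n} (\<lambda>_. lborel)))"
    proof (intro nn_integral_cong)
      fix y :: "real \<times> (nat \<Rightarrow> real)"
      have c: "(case (A, y) of (A, mu, theta) \<Rightarrow> 1 / A) = 1/A" by (cases y) simp
      show "ennreal ((case (A, y) of (A, mu, theta) \<Rightarrow> 1 / A) * post_dens V a b0 Y n (A, y)) = ennreal (1/A) * ennreal (post_dens V a b0 Y n (A, y))"
        unfolding c by (rule ennreal_mult) (use True pd_nonneg in auto)
    qed
    also have "\<dots> = ennreal (1/A) * (\<integral>\<^sup>+y. ennreal (post_dens V a b0 Y n (A, y)) \<partial>(lborel \<Otimes>\<^sub>M PiM {..<n} (\<lambda>_. lborel)))"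
      by (rule nn_integral_cmult[OF meas_pd3])
    also have "\<dots> = ennreal (1/A) * (ennreal K * ennreal ?Q)"
      unfolding inner0 using True by simp
    also have "\<dots> = ennreal K * ennreal (1/A * ?Q)"
    proof -
      have e: "ennreal (1/A * ?Q) = ennreal (1/A) * ennreal ?Q" using True Qf_nonneg by (intro ennreal_mult) auto
      show ?thesis unfolding e by (simp only: ac_simps)
    qed
    finally show ?thesis using True by simp
  next
    case False then show ?thesis by (simp add: pd0)
  qed
  have "(\<integral>\<^sup>+x. ennreal ((case x of (A, mu, theta) \<Rightarrow> 1 / A) * post_dens V a b0 Y n x) \<partial>state_space n)
      = (\<integral>\<^sup>+A. \<integral>\<^sup>+y. ennreal ((case (A, y) of (A, mu, theta) \<Rightarrow> 1 / A) * post_dens V a b0 Y n (A, y)) \<partial>(lborel \<Otimes>\<^sub>M PiM {..<n} (\<lambda>_. lborel)) \<partial>lborel)"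
    unfolding state_space_def
    by (rule PP.nn_integral_fst[where f="\<lambda>x. ennreal ((case x of (A, mu, theta) \<Rightarrow> 1 / A) * post_dens V a b0 Y n x)", symmetric])
      (rule meas_pd1[unfolded state_space_def])
  also have "\<dots> = ennreal K * (\<integral>\<^sup>+A. ennreal (if A > 0 then 1/A * Qf V a b0 (real n - 1) (Delta Y n / (real n - 1)) A else 0) \<partial>lborel)"
    unfolding inner1 by (rule nn_integral_cmult[OF meas_f1])
  finally show "(\<integral>\<^sup>+x. ennreal ((case x of (A, mu, theta) \<Rightarrow> 1 / A) * post_dens V a b0 Y n x) \<partial>state_space n)
      = ennreal (sqrt (2*pi*V)^n * sqrt (2*pi/n)) * (\<integral>\<^sup>+A. ennreal (if A > 0 then 1/A * Qf V a b0 (real n - 1) (Delta Y n / (real n - 1)) A else 0) \<partial>lborel)"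
    unfolding K_def .
qed

theorem mainTheorem10:
  fixes V a b0 \<delta> M :: real and N0 :: nat and Y :: "nat \<Rightarrow> nat \<Rightarrow> real"
  assumes "V > 0" and "a > 0" and "b0 > 0"
    and "\<delta> > 0"
    and "\<And>n. n \<ge> 2 \<Longrightarrow> Delta Y n / (real n - 1) \<le> M"
    and "\<And>n. n \<ge> 2 \<Longrightarrow> n \<ge> N0 \<Longrightarrow> Delta Y n / (real n - 1) \<ge> V + \<delta>"
  shows "\<exists>N. \<forall>n\<ge>N. post_expect V a b0 Y n (\<lambda>(A, mu, theta). 1 / A) \<le> ennreal (2 / \<delta>)"
proof -
  from oneD[OF assms(1-4), of M] obtain N where N: "\<forall>m D. m \<ge> N \<longrightarrow> V+\<delta> \<le> D \<longrightarrow> D \<le> M \<longrightarrow>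
    (\<integral>\<^sup>+A. ennreal (if A > 0 then 1/A * Qf V a b0 m D A else 0) \<partial>lborel)
      \<le> ennreal (2/\<delta>) * (\<integral>\<^sup>+A. ennreal (if A > 0 then Qf V a b0 m D A else 0) \<partial>lborel)" ..
  show ?thesis
  proof (intro exI[of _ "max (max 2 N0) (nat \<lceil>N\<rceil> + 1)"] allI impI)
    fix n assume nN: "max (max 2 N0) (nat \<lceil>N\<rceil> + 1) \<le> n"
    have n2: "n \<ge> 2" and nN0: "n \<ge> N0" and nN1: "n \<ge> nat \<lceil>N\<rceil> + 1" using nN by auto
    have mN: "real n - 1 \<ge> N"
    proof -
      have "real (nat \<lceil>N\<rceil>) \<ge> N" by (rule real_nat_ceiling_ge)
      moreover have "real (nat \<lceil>N\<rceil> + 1) \<le> real n" using nN1 by (simp only: of_nat_le_iff)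
      then have "real n \<ge> real (nat \<lceil>N\<rceil>) + 1" by simp
      ultimately show ?thesis by linarith
    qed
    define K where "K = sqrt (2*pi*V)^n * sqrt (2*pi/n)"
    define D where "D = Delta Y n / (real n - 1)"
    have le: "(\<integral>\<^sup>+A. ennreal (if A > 0 then 1/A * Qf V a b0 (real n - 1) D A else 0) \<partial>lborel)
      \<le> ennreal (2/\<delta>) * (\<integral>\<^sup>+A. ennreal (if A > 0 then Qf V a b0 (real n - 1) D A else 0) \<partial>lborel)"
    proof -
      have D1: "V+\<delta> \<le> D" unfolding D_def by (rule assms(6)[OF n2 nN0])
      have D2: "D \<le> M" unfolding D_def by (rule assms(5)[OF n2])
      show ?thesis by (rule N[rule_format, OF mN D1 D2])
    qed
    show "post_expect V a b0 Y n (\<lambda>(A, mu, theta). 1 / A) \<le> ennreal (2 / \<delta>)"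
      unfolding post_expect_def
    proof (rule ennreal_div_le_of)
      have "(\<integral>\<^sup>+x. ennreal ((case x of (A, mu, theta) \<Rightarrow> 1 / A) * post_dens V a b0 Y n x) \<partial>state_space n)
          = ennreal K * (\<integral>\<^sup>+A. ennreal (if A > 0 then 1/A * Qf V a b0 (real n - 1) D A else 0) \<partial>lborel)"
        unfolding K_def D_def by (rule outer_int(2)[OF assms(1) n2])
      also have "\<dots> \<le> ennreal K * (ennreal (2/\<delta>) * (\<integral>\<^sup>+A. ennreal (if A > 0 then Qf V a b0 (real n - 1) D A else 0) \<partial>lborel))"
        using le by (rule mult_left_mono) simp
      also have "\<dots> = ennreal (2/\<delta>) * (\<integral>\<^sup>+x. ennreal (post_dens V a b0 Y n x) \<partial>state_space n)"
        unfolding K_def D_def outer_int(1)[OF assms(1) n2] by (simp add: mult.left_commute)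
      finally show "(\<integral>\<^sup>+x. ennreal ((case x of (A, mu, theta) \<Rightarrow> 1 / A) * post_dens V a b0 Y n x) \<partial>state_space n)
          \<le> ennreal (2/\<delta>) * (\<integral>\<^sup>+x. ennreal (post_dens V a b0 Y n x) \<partial>state_space n)" .
    qed
  qed
qed

end
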